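(* Let $\mathfrak{d}\geq 3$ be an integer, $c>0$, $\lambda>0$, and let $p_{\mathbf{Y}_{\mathfrak{d}}}(\mathbf{y},t)$ denote the density of the absolutely continuous component of the law of the random flight $\mathbf{Y}_{\mathfrak{d}}(t)$ described in the context. Define, for $t>0$ and $\|\mathbf{y}\|<ct$, $$f(\mathbf{y},t)=\pi^{\mathfrak{d}/2}(ct)^{\mathfrak{d}-2}E_{\frac{\mathfrak{d}}{2}-1,\frac{\mathfrak{d}}{2},\frac{\mathfrak{d}}{2}-1,\frac{\mathfrak{d}-1}{2}}\!\left(\left(\tfrac{\lambda t}{2}\right)^{\mathfrak{d}-2}\right)p_{\mathbf{Y}_{\mathfrak{d}}}(\mathbf{y},t).$$ Then $$f(\mathbf{y},t)=\sum_{k=1}^{\infty}\left(\frac{\lambda}{2c}\right)^{k(\mathfrak{d}-2)}\frac{\left(\sqrt{c^2t^2-\|\mathbf{y}\|^2}\right)^{k(\mathfrak{d}-2)-2}}{\Gamma\!\left(k(\frac{\mathfrak{d}}{2}-1)\right)\Gamma\!\left(\frac{\mathfrak{d}-1}{2}+(\frac{\mathfrak{d}}{2}-1)k\right)},$$ and $u=f$ solves the higher order non-homogeneous Klein–Gordon equation $$\left(\frac{\partial^2}{\partial t^2}-c^2\Delta\right)^{\mathfrak{d}-2}u(\mathbf{y},t)=\lambda^{2(\mathfrak{d}-2)}u(\mathbf{y},t)+(2\lambda c)^{\mathfrak{d}-2}\frac{(c^2t^2-\|\mathbf{y}\|^2)^{-\mathfrak{d}/2}}{\sqrt{\pi}\,\Gamma(1-\frac{\mathfrak{d}}{2})},\qquad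 \Delta=\sum_{j=1}^{\mathfrak{d}}\frac{\partial^2}{\partial y_j^2},$$ in the region $\{(\mathbf{y},t):t>0,\ \|\mathbf{y}\|<ct\}$.
   Context: Random flight $\mathbf{Y}_{\mathfrak{d}}(t)$ in $\mathbb{R}^{\mathfrak{d}}$: a particle starts at the origin at time $0$ and moves with constant speed $c>0$; it changes direction $\mathcal{N}_{\mathfrak{d}}(t)$ times in $(0,t)$; successive directions are independent and uniform on $S^{\mathfrak{d}-1}$. Given $\mathcal{N}_{\mathfrak{d}}(t)=k$, the segment durations $\tau_1,\dots,\tau_{k+1}$ ($\tau_{k+1}=t-\sum_{j=1}^k\tau_j$) have joint density $\frac{\Gamma((k+1)(\frac{\mathfrak{d}}{2}-1))}{\Gamma(\frac{\mathfrak{d}}{2}-1)^{k+1}}\frac{1}{t^{(k+1)(\frac{\mathfrak{d}}{2}-1)-1}}\prod_{j=1}^{k+1}\tau_j^{\frac{\mathfrak{d}}{2}-2}$ (Dirichlet with parameters $(\frac{\mathfrak{d}}{2}-1,\dots,\frac{\mathfrak{d}}{2}-1)$ rescaled to total $t$), independent of the directions. The number of changes has law $P\{\mathcal{N}_{\mathfrak{d}}(t)=k\}=\frac{1}{E_{\mathfrak{d}-2,\mathfrak{d}-1}((\lambda t)^{\mathfrak{d}-2})}\frac{(\lambda t)^{k(\mathfrak{d}-2)}}{\Gamma((\mathfrak{d}-2)k+\mathfrak{d}-1)}$, $k=0,1,\dots$, with $E_{\alpha,\beta}(x)=\sum_{k\ge0}x^k/\Gamma(\alpha k+\beta)$. It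 is known that for $k\geq1$ the conditional density of $\mathbf{Y}_{\mathfrak{d}}(t)$ given $\mathcal{N}_{\mathfrak{d}}(t)=k$ is $p(\mathbf{y},t;k)=\frac{\Gamma((k+1)(\frac{\mathfrak{d}}{2}-1)+1)}{\Gamma(k(\frac{\mathfrak{d}}{2}-1))}\frac{(c^2t^2-\|\mathbf{y}\|^2)^{k(\frac{\mathfrak{d}}{2}-1)-1}}{\pi^{\mathfrak{d}/2}(ct)^{2(k+1)(\frac{\mathfrak{d}}{2}-1)}}$ on $\|\mathbf{y}\|<ct$, and $p_{\mathbf{Y}_{\mathfrak{d}}}(\mathbf{y},t)=\sum_{k\geq1}p(\mathbf{y},t;k)P\{\mathcal{N}_{\mathfrak{d}}(t)=k\}$. The multi-index Mittag-Leffler function is $E_{\frac{\mathfrak{d}}{2}-1,\frac{\mathfrak{d}}{2},\frac{\mathfrak{d}}{2}-1,\frac{\mathfrak{d}-1}{2}}(z)=\sum_{k=0}^\infty\frac{z^k}{\Gamma((k+1)(\frac{\mathfrak{d}}{2}-1)+1)\Gamma(\frac{\mathfrak{d}-1}{2}+(\frac{\mathfrak{d}}{2}-1)k)}$. Convention: $1/\Gamma(-n)=0$ for nonnegative integers $n$, so the inhomogeneous term vanishes for even $\mathfrak{d}$. *)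

theory Defs
  imports "HOL-Analysis.Analysis"
begin

definition ML2 :: "real \<Rightarrow> real \<Rightarrow> real \<Rightarrow> real" where
  "ML2 \<alpha> \<beta> x = (\<Sum>k. x ^ k / Gamma (\<alpha> * real k + \<beta>))"

definition ML4 :: "real \<Rightarrow> real \<Rightarrow> real \<Rightarrow> real \<Rightarrow> real \<Rightarrow> real" where
  "ML4 \<alpha>1 \<beta>1 \<alpha>2 \<beta>2 x =
     (\<Sum>k. x ^ k / (Gamma (\<alpha>1 * real k + \<beta>1) * Gamma (\<alpha>2 * real k + \<beta>2)))"

text \<open>Law of the number of direction changes: P{N_d(t) = k}.\<close>
definition PN :: "nat \<Rightarrow> real \<Rightarrow> real \<Rightarrow> nat \<Rightarrow> real" where
  "PN d lam t k =
     (1 / ML2 (real d - 2) (real d - 1) ((lam * t) ^ (d - 2))) *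
     ((lam * t) ^ (k * (d - 2)) / Gamma ((real d - 2) * real k + real d - 1))"

text \<open>Conditional density of Y_d(t) given N_d(t) = k (k >= 1), at a point y
  of Euclidean norm r (zero outside the ball of radius c t).\<close>
definition pcond :: "nat \<Rightarrow> real \<Rightarrow> real \<Rightarrow> real \<Rightarrow> nat \<Rightarrow> real" where
  "pcond d c r t k =
     (if r < c * t then
        Gamma ((real k + 1) * (real d / 2 - 1) + 1) / Gamma (real k * (real d / 2 - 1)) *
        ((c\<^sup>2 * t\<^sup>2 - r\<^sup>2) powr (real k * (real d / 2 - 1) - 1) /
         (pi powr (real d / 2) * (c * t) powr (2 * (real k + 1) * (real d / 2 - 1))))
      else 0)"

text \<open>Density of the absolutely continuous component of the law of Y_d(t),
  for y in R^d with d = CARD('n):  sum_{k>=1} p(y,t;k) P{N_d(t)=k}.\<close>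
definition pY :: "real \<Rightarrow> real \<Rightarrow> real ^ 'n \<Rightarrow> real \<Rightarrow> real" where
  "pY c lam y t =
     (\<Sum>k. pcond CARD('n) c (norm y) t (Suc k) * PN CARD('n) lam t (Suc k))"

definition fY :: "real \<Rightarrow> real \<Rightarrow> real ^ 'n \<Rightarrow> real \<Rightarrow> real" where
  "fY c lam y t =
     (let d = real CARD('n) in
       pi powr (d / 2) * (c * t) powr (d - 2) *
       ML4 (d / 2 - 1) (d / 2) (d / 2 - 1) ((d - 1) / 2) ((lam * t / 2) powr (d - 2)) *
       pY c lam y t)"

text \<open>Directions: None = time variable t, Some j = space coordinate y_j.\<close>
definition shifted :: "(real ^ 'n \<Rightarrow> real \<Rightarrow> real) \<Rightarrow> 'n option \<Rightarrow> real ^ 'n \<Rightarrow> real \<Rightarrow> real \<Rightarrow> real" where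
  "shifted g dir y t s =
     (case dir of None \<Rightarrow> g y (t + s) | Some j \<Rightarrow> g (y + s *\<^sub>R axis j 1) t)"

definition partial :: "'n option \<Rightarrow> (real ^ 'n \<Rightarrow> real \<Rightarrow> real) \<Rightarrow> real ^ 'n \<Rightarrow> real \<Rightarrow> real" where
  "partial dir g y t = deriv (shifted g dir y t) 0"

definition iter_partial :: "'n option list \<Rightarrow> (real ^ 'n \<Rightarrow> real \<Rightarrow> real) \<Rightarrow> real ^ 'n \<Rightarrow> real \<Rightarrow> real" where
  "iter_partial ds g = foldr partial ds g"

definition all_partials_exist :: "((real ^ 'n) \<times> real) set \<Rightarrow> (real ^ 'n \<Rightarrow> real \<Rightarrow> real) \<Rightarrow> bool" where
  "all_partials_exist S g \<longleftrightarrow>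
     (\<forall>ds dir y t. (y, t) \<in> S \<longrightarrow> shifted (iter_partial ds g) dir y t differentiable (at 0))"

definition KG :: "real \<Rightarrow> (real ^ 'n \<Rightarrow> real \<Rightarrow> real) \<Rightarrow> real ^ 'n \<Rightarrow> real \<Rightarrow> real" where
  "KG c g y t = partial None (partial None g) y t
                - c\<^sup>2 * (\<Sum>j\<in>UNIV. partial (Some j) (partial (Some j) g) y t)"

end

theory Submission
  imports Defs
begin


lemma Gamma_dup_real:
  fixes m :: real assumes "m \<ge> 0"
  shows "Gamma (m + 1/2) * Gamma (m + 1) = 2 powr (- 2 * m) * sqrt pi * Gamma (2 * m + 1)"
proof -
  define z where "z = complex_of_real (m + 1/2)"
  have z1: "z \<notin> \<int>\<^sub>\<le>\<^sub>0" unfolding z_def using assms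
    by (subst of_real_in_nonpos_Ints_iff) (auto dest!: nonpos_Ints_nonpos)
  have zz: "z + 1/2 = complex_of_real (m + 1)" unfolding z_def by simp
  have z2: "z + 1/2 \<notin> \<int>\<^sub>\<le>\<^sub>0" unfolding zz using assms
    by (subst of_real_in_nonpos_Ints_iff) (auto dest!: nonpos_Ints_nonpos)
  have D: "Gamma z * Gamma (z + 1/2) = exp ((1 - 2*z) * of_real (ln 2)) * of_real (sqrt pi) * Gamma (2*z)"
    by (rule Gamma_legendre_duplication[OF z1 z2])
  have e1: "2 * z = complex_of_real (2*m+1)" unfolding z_def by (simp add: algebra_simps)
  have e2: "exp ((1 - 2*z) * of_real (ln 2)) = complex_of_real (2 powr (- 2 * m))" unfolding z_def
    by (simp add: algebra_simps powr_def flip: exp_of_real)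
  have X: "Gamma (complex_of_real (m + 1/2)) * Gamma (complex_of_real (m+1)) =
        complex_of_real (2 powr (- 2 * m)) * of_real (sqrt pi) * Gamma (complex_of_real (2*m+1))"
      using D[unfolded e2, unfolded e1 zz] by (simp only: z_def)
  have "complex_of_real (Gamma (m + 1/2) * Gamma (m+1)) =
     complex_of_real (2 powr (- 2 * m) * sqrt pi * Gamma (2*m+1))"
    using X by (simp only: Gamma_complex_of_real of_real_mult[symmetric])
  then show ?thesis using of_real_eq_iff by blast
qed



definition entire :: "(nat \<Rightarrow> real) \<Rightarrow> bool" where
  "entire a \<longleftrightarrow> (\<forall>z. summable (\<lambda>k. a k * z ^ k))"

definition GS :: "real \<Rightarrow> (nat \<Rightarrow> real) \<Rightarrow> real \<Rightarrow> real \<Rightarrow> real" where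
  "GS n a b w = w powr b * (\<Sum>k. a k * (w powr n) ^ k)"

definition dco :: "real \<Rightarrow> real \<Rightarrow> (nat \<Rightarrow> real) \<Rightarrow> nat \<Rightarrow> real" where
  "dco n b a k = (real k * n + b) * a k"

lemma series_k:
  assumes "entire a"
  shows "(\<lambda>k. real k * a k * z ^ k) sums (z * (\<Sum>k. diffs a k * z ^ k))"
proof -
  have "summable (\<lambda>k. diffs a k * z ^ k)"
    using assms unfolding entire_def by (intro termdiff_converges_all) auto
  then have "(\<lambda>k. z * (diffs a k * z ^ k)) sums (z * (\<Sum>k. diffs a k * z ^ k))"
    by (intro sums_mult summable_sums)
  moreover have "(\<lambda>k. z * (diffs a k * z ^ k)) = (\<lambda>k. real (Suc k) * a (Suc k) * z ^ Suc k)"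
    by (auto simp: diffs_def fun_eq_iff algebra_simps)
  ultimately have "(\<lambda>k. real (Suc k) * a (Suc k) * z ^ Suc k) sums (z * (\<Sum>k. diffs a k * z ^ k))"
    by simp
  then show ?thesis by (subst (asm) sums_Suc_iff) simp
qed

lemma entire_dco: "entire a \<Longrightarrow> entire (dco n b a)"
  unfolding entire_def
proof
  fix z assume a: "\<forall>z. summable (\<lambda>k. a k * z ^ k)"
  have "summable (\<lambda>k. real k * a k * z ^ k)" using series_k[of a z] a unfolding entire_def
    by (auto simp: sums_iff)
  then have "summable (\<lambda>k. n * (real k * a k * z ^ k) + b * (a k * z ^ k))"
    using a by (intro summable_add summable_mult) auto
  then show "summable (\<lambda>k. dco n b a k * z ^ k)"
    by (simp add: dco_def algebra_simps)
qed

lemma GS_deriv: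
  assumes "entire a" "w > 0"
  shows "(GS n a b has_real_derivative GS n (dco n b a) (b - 1) w) (at w)"
proof -
  define P where "P = (\<lambda>z::real. \<Sum>k. a k * z ^ k)"
  define P' where "P' = (\<lambda>z::real. \<Sum>k. diffs a k * z ^ k)"
  have dP: "(P has_real_derivative P' z) (at z)" for z
    unfolding P_def P'_def using assms(1) unfolding entire_def
    by (intro termdiffs_strong_converges_everywhere) auto
  have GSeq: "GS n a b = (\<lambda>w. w powr b * P (w powr n))" by (simp add: GS_def P_def fun_eq_iff)
  define z where "z = w powr n"
  have d1: "((\<lambda>w. w powr b * P (w powr n)) has_real_derivative
     (b * w powr (b - 1) * P z + w powr b * (P' z * (n * w powr (n - 1))))) (at w)"
  proof -
    have dpow: "((\<lambda>x. x powr n) has_real_derivative n * w powr (n - 1)) (at w)"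
      using assms(2) by (intro derivative_eq_intros) auto
    have dc: "((\<lambda>x. P (x powr n)) has_real_derivative P' z * (n * w powr (n - 1))) (at w)"
      unfolding z_def by (rule DERIV_chain2[OF dP dpow])
    have dpb: "((\<lambda>x. x powr b) has_real_derivative b * w powr (b - 1)) (at w)"
      using assms(2) by (intro derivative_eq_intros) auto
    show ?thesis
      by (rule DERIV_cong[OF DERIV_mult[OF dpb dc]]) (simp add: z_def algebra_simps)
  qed
  have sk: "(\<lambda>k. real k * a k * z ^ k) sums (z * P' z)" unfolding P'_def by (rule series_k[OF assms(1)])
  have sa: "(\<lambda>k. a k * z ^ k) sums P z" unfolding P_def using assms(1) unfolding entire_def
    by (intro summable_sums) auto
  have "(\<lambda>k. n * (real k * a k * z ^ k) + b * (a k * z ^ k)) sums (n * (z * P' z) + b * P z)"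
    by (intro sums_add sums_mult sk sa)
  then have "(\<Sum>k. dco n b a k * z ^ k) = n * (z * P' z) + b * P z"
    by (simp add: sums_iff dco_def algebra_simps)
  then have R: "GS n (dco n b a) (b - 1) w = w powr (b - 1) * (n * (z * P' z) + b * P z)"
    by (simp add: GS_def z_def)
  have "w powr b * (P' z * (n * w powr (n - 1))) = w powr (b - 1) * (n * (z * P' z))"
    using assms(2) by (simp add: z_def powr_diff field_simps)
  then have "b * w powr (b - 1) * P z + w powr b * (P' z * (n * w powr (n - 1))) =
      GS n (dco n b a) (b - 1) w" unfolding R by (simp add: algebra_simps)
  then show ?thesis using d1 GSeq by simp
qed



fun Sm1 :: "nat \<Rightarrow> real set \<Rightarrow> (real \<Rightarrow> real) \<Rightarrow> bool" where
  "Sm1 0 U h = True"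
| "Sm1 (Suc m) U h = (\<exists>h'. (\<forall>x\<in>U. (h has_real_derivative h' x) (at x)) \<and> Sm1 m U h')"

lemma GS_smooth: "entire a \<Longrightarrow> Sm1 m {0<..} (GS n a b)"
proof (induction m arbitrary: a b)
  case 0 then show ?case by simp
next
  case (Suc m)
  show ?case unfolding Sm1.simps
    by (rule exI[of _ "GS n (dco n b a) (b - 1)"])
       (use Suc GS_deriv entire_dco in auto)
qed

fun Smv :: "nat \<Rightarrow> ((real ^ 'n) \<times> real) set \<Rightarrow> (real ^ 'n \<Rightarrow> real \<Rightarrow> real) \<Rightarrow> bool" where
  "Smv 0 S g = True"
| "Smv (Suc m) S g = (\<forall>dir. \<exists>g'. (\<forall>y t. (y, t) \<in> S \<longrightarrow>
        (shifted g dir y t has_real_derivative g' y t) (at 0)) \<and> Smv m S g')"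

definition spt :: "'n option \<Rightarrow> real ^ 'n \<Rightarrow> real \<Rightarrow> real \<Rightarrow> (real ^ 'n) \<times> real" where
  "spt dir y t s = (case dir of None \<Rightarrow> (y, t + s) | Some j \<Rightarrow> (y + s *\<^sub>R axis j 1, t))"

lemma shifted_spt: "shifted g dir y t s = case_prod g (spt dir y t s)"
  by (cases dir) (auto simp: shifted_def spt_def)

lemma shifted_eq: "shifted g dir y t = (\<lambda>s. case_prod g (spt dir y t s))"
  by (rule ext) (simp add: shifted_spt)

lemma spt0 [simp]: "spt dir y t 0 = (y, t)"
  by (cases dir) (auto simp: spt_def)

lemma dist_spt: "dist (spt dir y t s) (y, t) = \<bar>s\<bar>"
  by (cases dir) (auto simp: spt_def dist_Pair_Pair dist_norm)

lemma spt_local: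
  assumes "open S" "(y, t) \<in> S"
  shows "\<exists>e>0. \<forall>s. \<bar>s\<bar> < e \<longrightarrow> spt dir y t s \<in> S"
proof -
  obtain e where "e > 0" "ball (y, t) e \<subseteq> S" using assms openE by blast
  moreover have "spt dir y t s \<in> ball (y, t) e" if "\<bar>s\<bar> < e" for s
  proof -
    have "dist (y, t) (spt dir y t s) = \<bar>s\<bar>" by (metis dist_commute dist_spt)
    then show ?thesis using that by simp
  qed
  ultimately show ?thesis by blast
qed

lemma deriv_local:
  assumes "open S" "(y, t) \<in> S" "\<forall>y t. (y, t) \<in> S \<longrightarrow> f y t = g y t"
    and "(shifted f dir y t has_real_derivative D) (at 0)"
  shows "(shifted g dir y t has_real_derivative D) (at 0)"
proof -
  obtain e where e: "e > 0" "\<And>s. \<bar>s\<bar> < e \<Longrightarrow> spt dir y t s \<in> S"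
    using spt_local[OF assms(1,2)] by blast
  have eq: "shifted f dir y t s = shifted g dir y t s" if "\<bar>s\<bar> < e" for s
  proof -
    have "spt dir y t s \<in> S" using e(2)[OF that] .
    then have "f (fst (spt dir y t s)) (snd (spt dir y t s)) = g (fst (spt dir y t s)) (snd (spt dir y t s))"
      using assms(3) by simp
    then show ?thesis by (simp add: shifted_spt case_prod_beta)
  qed
  show ?thesis
    using has_field_derivative_transform_within[of "shifted f dir y t" D 0 UNIV e "shifted g dir y t"]
      assms(4) e(1) eq by auto
qed

lemma SmvE:
  assumes "Smv (Suc m) S g"
  obtains g' where "\<forall>y t. (y, t) \<in> S \<longrightarrow> (shifted g dir y t has_real_derivative g' y t) (at 0)" "Smv m S g'"
proof -
  have "\<exists>g'. (\<forall>y t. (y, t) \<in> S \<longrightarrow> (shifted g dir y t has_real_derivative g' y t) (at 0)) \<and> Smv m S g'"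
    using assms by (simp only: Smv.simps)
  then show ?thesis using that by blast
qed

lemma Smv_mono: "Smv (Suc m) S g \<Longrightarrow> Smv m S g"
proof (induction m arbitrary: g)
  case 0 then show ?case by simp
next
  case (Suc m)
  show ?case unfolding Smv.simps
  proof
    fix dir
    obtain g' where "\<forall>y t. (y, t) \<in> S \<longrightarrow> (shifted g dir y t has_real_derivative g' y t) (at 0)"
      "Smv (Suc m) S g'" using Suc.prems by (rule SmvE)
    then show "\<exists>g'. (\<forall>y t. (y, t) \<in> S \<longrightarrow> (shifted g dir y t has_real_derivative g' y t) (at 0)) \<and> Smv m S g'"
      using Suc.IH by blast
  qed
qed

lemma Smv_const: "Smv m S (\<lambda>y t. k)"
proof (induction m arbitrary: k)
  case 0 then show ?case by simp
next
  case (Suc m)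
  show ?case unfolding Smv.simps
    by (auto intro!: exI[of _ "\<lambda>y t. 0"] Suc simp: shifted_eq)
qed

lemma Smv_add: "Smv m S f \<Longrightarrow> Smv m S g \<Longrightarrow> Smv m S (\<lambda>y t. f y t + g y t)"
proof (induction m arbitrary: f g)
  case 0 then show ?case by simp
next
  case (Suc m)
  show ?case unfolding Smv.simps
  proof
    fix dir
    obtain f' where f': "\<forall>y t. (y, t) \<in> S \<longrightarrow> (shifted f dir y t has_real_derivative f' y t) (at 0)"
      "Smv m S f'" using Suc.prems(1) by (rule SmvE)
    obtain g' where g': "\<forall>y t. (y, t) \<in> S \<longrightarrow> (shifted g dir y t has_real_derivative g' y t) (at 0)"
      "Smv m S g'" using Suc.prems(2) by (rule SmvE)
    have "(shifted (\<lambda>y t. f y t + g y t) dir y t has_real_derivative f' y t + g' y t) (at 0)"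
      if "(y, t) \<in> S" for y t
      using DERIV_add[OF f'(1)[rule_format, OF that] g'(1)[rule_format, OF that]]
      by (simp add: shifted_eq case_prod_beta)
    then show "\<exists>h. (\<forall>y t. (y, t) \<in> S \<longrightarrow> (shifted (\<lambda>y t. f y t + g y t) dir y t has_real_derivative h y t) (at 0)) \<and> Smv m S h"
      using Suc.IH[OF f'(2) g'(2)] by (intro exI[of _ "\<lambda>y t. f' y t + g' y t"]) auto
  qed
qed

lemma Smv_mult: "Smv m S f \<Longrightarrow> Smv m S g \<Longrightarrow> Smv m S (\<lambda>y t. f y t * g y t)"
proof (induction m arbitrary: f g)
  case 0 then show ?case by simp
next
  case (Suc m)
  show ?case unfolding Smv.simps
  proof
    fix dir
    obtain f' where f': "\<forall>y t. (y, t) \<in> S \<longrightarrow> (shifted f dir y t has_real_derivative f' y t) (at 0)"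
      "Smv m S f'" using Suc.prems(1) by (rule SmvE)
    obtain g' where g': "\<forall>y t. (y, t) \<in> S \<longrightarrow> (shifted g dir y t has_real_derivative g' y t) (at 0)"
      "Smv m S g'" using Suc.prems(2) by (rule SmvE)
    have "(shifted (\<lambda>y t. f y t * g y t) dir y t has_real_derivative f' y t * g y t + g' y t * f y t) (at 0)"
      if "(y, t) \<in> S" for y t
      using DERIV_mult[OF f'(1)[rule_format, OF that] g'(1)[rule_format, OF that]]
      by (simp add: shifted_eq case_prod_beta)
    moreover have "Smv m S (\<lambda>y t. f' y t * g y t + g' y t * f y t)"
      by (rule Smv_add[OF Suc.IH[OF f'(2) Smv_mono[OF Suc.prems(2)]] Suc.IH[OF g'(2) Smv_mono[OF Suc.prems(1)]]])
    ultimately show "\<exists>h. (\<forall>y t. (y, t) \<in> S \<longrightarrow> (shifted (\<lambda>y t. f y t * g y t) dir y t has_real_derivative h y t) (at 0)) \<and> Smv m S h"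
      by (intro exI[of _ "\<lambda>y t. f' y t * g y t + g' y t * f y t"]) auto
  qed
qed

lemma Smv_sum: "finite I \<Longrightarrow> (\<And>i. i \<in> I \<Longrightarrow> Smv m S (f i)) \<Longrightarrow> Smv m S (\<lambda>y t. \<Sum>i\<in>I. f i y t)"
proof (induction I rule: finite_induct)
  case empty then show ?case using Smv_const[of m S 0] by simp
next
  case (insert x F)
  then show ?case using Smv_add[of m S "f x" "\<lambda>y t. \<Sum>i\<in>F. f i y t"] by simp
qed

lemma Smv_comp:
  "Sm1 m U h \<Longrightarrow> Smv m S g \<Longrightarrow> (\<And>y t. (y, t) \<in> S \<Longrightarrow> g y t \<in> U) \<Longrightarrow> Smv m S (\<lambda>y t. h (g y t))"
proof (induction m arbitrary: h g)
  case 0 then show ?case by simp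
next
  case (Suc m)
  obtain h' where h': "\<forall>x\<in>U. (h has_real_derivative h' x) (at x)" "Sm1 m U h'"
    using Suc.prems(1) by auto
  show ?case unfolding Smv.simps
  proof
    fix dir
    obtain g' where g': "\<forall>y t. (y, t) \<in> S \<longrightarrow> (shifted g dir y t has_real_derivative g' y t) (at 0)"
      "Smv m S g'" using Suc.prems(2) by (rule SmvE)
    have "(shifted (\<lambda>y t. h (g y t)) dir y t has_real_derivative h' (g y t) * g' y t) (at 0)"
      if "(y, t) \<in> S" for y t
    proof -
      have "(h has_real_derivative h' (shifted g dir y t 0)) (at (shifted g dir y t 0))"
        using h'(1) Suc.prems(3)[OF that] by (simp add: shifted_spt)
      from DERIV_chain2[OF this g'(1)[rule_format, OF that]]
      show ?thesis by (simp add: shifted_eq case_prod_beta)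
    qed
    moreover have "Smv m S (\<lambda>y t. h' (g y t) * g' y t)"
      by (rule Smv_mult[OF Suc.IH[OF h'(2) Smv_mono[OF Suc.prems(2)] Suc.prems(3)] g'(2)])
    ultimately show "\<exists>k. (\<forall>y t. (y, t) \<in> S \<longrightarrow> (shifted (\<lambda>y t. h (g y t)) dir y t has_real_derivative k y t) (at 0)) \<and> Smv m S k"
      by (intro exI[of _ "\<lambda>y t. h' (g y t) * g' y t"]) auto
  qed
qed

lemma Smv_cong:
  assumes "open S" "\<forall>y t. (y, t) \<in> S \<longrightarrow> f y t = g y t" "Smv m S f"
  shows "Smv m S g"
proof (cases m)
  case 0 then show ?thesis by simp
next
  case (Suc k)
  show ?thesis unfolding Suc Smv.simps
  proof
    fix dir
    obtain g' where g': "\<forall>y t. (y, t) \<in> S \<longrightarrow> (shifted f dir y t has_real_derivative g' y t) (at 0)"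
      "Smv k S g'" using assms(3) unfolding Suc by (rule SmvE)
    then show "\<exists>g'. (\<forall>y t. (y, t) \<in> S \<longrightarrow> (shifted g dir y t has_real_derivative g' y t) (at 0)) \<and> Smv k S g'"
      using deriv_local[OF assms(1) _ assms(2)] by blast
  qed
qed

lemma Smv_time: "Smv m S (\<lambda>y t. t)"
proof (cases m)
  case 0 then show ?thesis by simp
next
  case (Suc k)
  show ?thesis unfolding Suc Smv.simps
  proof
    fix dir :: "'a option"
    show "\<exists>g'. (\<forall>y t. (y, t) \<in> S \<longrightarrow> (shifted (\<lambda>y t. t) dir y t has_real_derivative g' y t) (at 0)) \<and> Smv k S g'"
      by (rule exI[of _ "\<lambda>y t. case dir of None \<Rightarrow> 1 | Some j \<Rightarrow> 0"])
        (cases dir, auto simp: shifted_eq spt_def Smv_const intro!: derivative_eq_intros)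
  qed
qed

lemma Smv_coord: "Smv m S (\<lambda>y t. y $ i)"
proof (cases m)
  case 0 then show ?thesis by simp
next
  case (Suc k)
  show ?thesis unfolding Suc Smv.simps
  proof
    fix dir :: "'a option"
    show "\<exists>g'. (\<forall>y t. (y, t) \<in> S \<longrightarrow> (shifted (\<lambda>y t. y $ i) dir y t has_real_derivative g' y t) (at 0)) \<and> Smv k S g'"
      by (rule exI[of _ "\<lambda>y t. case dir of None \<Rightarrow> 0 | Some j \<Rightarrow> axis j 1 $ i"])
        (cases dir, auto simp: shifted_eq spt_def Smv_const intro!: derivative_eq_intros)
  qed
qed

lemma norm_sq_sum: "(norm (y :: real ^ 'n))\<^sup>2 = (\<Sum>i\<in>UNIV. y $ i * y $ i)"
  by (simp add: power2_norm_eq_inner inner_vec_def)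

lemma iter_ex:
  assumes "open S"
  shows "Smv (length ds + m) S g \<Longrightarrow> \<exists>g'. Smv m S g' \<and> (\<forall>y t. (y, t) \<in> S \<longrightarrow> iter_partial ds g y t = g' y t)"
proof (induction ds arbitrary: m)
  case Nil then show ?case by (intro exI[of _ g]) (auto simp: iter_partial_def)
next
  case (Cons d ds)
  obtain g1 where g1: "Smv (Suc m) S g1" "\<forall>y t. (y, t) \<in> S \<longrightarrow> iter_partial ds g y t = g1 y t"
    using Cons.IH[of "Suc m"] Cons.prems by auto
  obtain g2 where g2: "\<forall>y t. (y, t) \<in> S \<longrightarrow> (shifted g1 d y t has_real_derivative g2 y t) (at 0)"
    "Smv m S g2" using g1(1) by (rule SmvE)
  have X: "iter_partial (d # ds) g y t = g2 y t" if "(y, t) \<in> S" for y t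
  proof -
    have "(shifted (iter_partial ds g) d y t has_real_derivative g2 y t) (at 0)"
      by (rule deriv_local[OF assms that _ g2(1)[rule_format, OF that]]) (use g1(2) in auto)
    then show ?thesis by (simp add: iter_partial_def partial_def DERIV_imp_deriv)
  qed
  show ?case
    by (rule exI[of _ g2], rule conjI, rule g2(2), intro allI impI, rule X)
qed

lemma all_partials_from_Smv:
  assumes "open S" "\<And>m. Smv m S g"
  shows "all_partials_exist S g"
  unfolding all_partials_exist_def
proof (intro allI impI)
  fix ds dir y t assume yt: "(y, t) \<in> S"
  obtain g' where g': "Smv (Suc 0) S g'" "\<forall>y t. (y, t) \<in> S \<longrightarrow> iter_partial ds g y t = g' y t"
    using iter_ex[OF assms(1), of ds "Suc 0" g] assms(2) by auto
  obtain g2 where g2a: "\<forall>y t. (y, t) \<in> S \<longrightarrow> (shifted g' dir y t has_real_derivative g2 y t) (at 0)"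
    "Smv 0 S g2" using g'(1) by (rule SmvE)
  note g2 = g2a(1)[rule_format, OF yt]
  have "(shifted (iter_partial ds g) dir y t has_real_derivative g2 y t) (at 0)"
    by (rule deriv_local[OF assms(1) yt _ g2]) (use g'(2) in auto)
  then show "shifted (iter_partial ds g) dir y t differentiable at 0"
    unfolding real_differentiable_def by (rule exI)
qed



definition Wf :: "real \<Rightarrow> real ^ 'n \<Rightarrow> real \<Rightarrow> real" where
  "Wf c y t = c\<^sup>2 * t\<^sup>2 - (norm y)\<^sup>2"

definition Sreg :: "real \<Rightarrow> ((real ^ 'n) \<times> real) set" where
  "Sreg c = {(y, t). t > 0 \<and> norm y < c * t}"

lemma open_Sreg: "open (Sreg c)"
proof -
  have "Sreg c = {p. 0 < snd p} \<inter> {p. norm (fst p) < c * snd p}"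
    by (auto simp: Sreg_def)
  also have "open \<dots>"
    by (intro open_Int open_Collect_less continuous_intros)
  finally show ?thesis .
qed

lemma Wf_pos: "(y, t) \<in> Sreg c \<Longrightarrow> c > 0 \<Longrightarrow> Wf c y t > 0"
proof -
  assume a: "(y, t) \<in> Sreg c" "c > 0"
  then have "norm y < c * t" "0 \<le> norm y" by (auto simp: Sreg_def)
  then have "(norm y)\<^sup>2 < (c * t)\<^sup>2" by (intro power_strict_mono) auto
  then show ?thesis by (simp add: Wf_def power_mult_distrib)
qed

lemma norm_shift_sq: "(norm (y + s *\<^sub>R axis j (1::real)))\<^sup>2 = (norm y)\<^sup>2 + 2 * s * (y $ j) + s\<^sup>2"
  unfolding power2_norm_eq_inner
  by (simp add: inner_add_left inner_add_right inner_axis inner_axis'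
      inner_axis_axis power2_eq_square algebra_simps inner_commute)

lemma dW: "(shifted (Wf c) dir y t has_real_derivative
    (case dir of None \<Rightarrow> 2 * c\<^sup>2 * t | Some j \<Rightarrow> - 2 * y $ j)) (at 0)"
proof (cases dir)
  case None
  have "shifted (Wf c) dir y t = (\<lambda>s. c\<^sup>2 * (t + s)\<^sup>2 - (norm y)\<^sup>2)"
    by (rule ext) (simp add: None shifted_def Wf_def)
  then show ?thesis using None by simp (auto intro!: derivative_eq_intros)
next
  case (Some j)
  have "shifted (Wf c) dir y t = (\<lambda>s. c\<^sup>2 * t\<^sup>2 - ((norm y)\<^sup>2 + 2 * s * (y $ j) + s\<^sup>2))"
    by (rule ext) (simp add: Some shifted_def Wf_def norm_shift_sq)
  then show ?thesis using Some by simp (auto intro!: derivative_eq_intros)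
qed

lemma dcomp:
  assumes "(shifted g dir y t has_real_derivative D) (at 0)" "(h has_real_derivative h' (g y t)) (at (g y t))"
  shows "(shifted (\<lambda>y t. h (g y t)) dir y t has_real_derivative h' (g y t) * D) (at 0)"
proof -
  have "(h has_real_derivative h' (g y t)) (at (shifted g dir y t 0))" using assms(2) by (simp add: shifted_spt)
  from DERIV_chain2[OF this assms(1)] show ?thesis by (simp add: shifted_eq case_prod_beta)
qed

lemma dmult:
  assumes "(shifted f dir y t has_real_derivative D1) (at 0)" "(shifted g dir y t has_real_derivative D2) (at 0)"
  shows "(shifted (\<lambda>y t. f y t * g y t) dir y t has_real_derivative D1 * g y t + D2 * f y t) (at 0)"
  using DERIV_mult[OF assms] by (simp add: shifted_eq case_prod_beta)

lemma dtime: "(shifted (\<lambda>y t. t) dir y t has_real_derivative (case dir of None \<Rightarrow> 1 | Some j \<Rightarrow> 0)) (at 0)"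
  by (cases dir) (auto simp: shifted_eq spt_def intro!: derivative_eq_intros)

lemma dcoord: "(shifted (\<lambda>y t. y $ i) dir y t has_real_derivative (case dir of None \<Rightarrow> 0 | Some j \<Rightarrow> axis j 1 $ i)) (at 0)"
  by (cases dir) (auto simp: shifted_eq spt_def intro!: derivative_eq_intros)

lemma partial_eq:
  assumes "open S" "(y, t) \<in> S" "\<forall>y t. (y, t) \<in> S \<longrightarrow> v y t = u y t"
    and "(shifted v dir y t has_real_derivative D) (at 0)"
  shows "partial dir u y t = D"
  unfolding partial_def by (rule DERIV_imp_deriv, rule deriv_local[OF assms])

lemma KG_comp:
  fixes u :: "real ^ 'n \<Rightarrow> real \<Rightarrow> real"
  assumes c: "c > 0"
    and h: "\<And>x. x > 0 \<Longrightarrow> (h has_real_derivative h1 x) (at x)"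
    and h1: "\<And>x. x > 0 \<Longrightarrow> (h1 has_real_derivative h2 x) (at x)"
    and u: "\<forall>y t. (y, t) \<in> Sreg c \<longrightarrow> u y t = h (Wf c y t)"
    and yt: "(y, t) \<in> Sreg c"
  shows "KG c u y t = 4 * c\<^sup>2 * Wf c y t * h2 (Wf c y t) + 2 * c\<^sup>2 * (real CARD('n) + 1) * h1 (Wf c y t)"
proof -
  let ?S = "Sreg c :: ((real ^ 'n) \<times> real) set"
  have oS: "open ?S" by (rule open_Sreg)
  have Wp: "\<And>y t. (y, t) \<in> ?S \<Longrightarrow> Wf c y t > 0" using Wf_pos c by blast
  define v0 where "v0 = (\<lambda>(y::real^'n) t. 2 * c\<^sup>2 * (t * h1 (Wf c y t)))"
  define vj where "vj = (\<lambda>j (y::real^'n) t. -2 * (y $ j * h1 (Wf c y t)))"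
  have hd: "(shifted (\<lambda>y t. h (Wf c y t)) dir y t has_real_derivative
        h1 (Wf c y t) * (case dir of None \<Rightarrow> 2 * c\<^sup>2 * t | Some j \<Rightarrow> - 2 * y $ j)) (at 0)"
    if "(y, t) \<in> ?S" for dir y t
    by (rule dcomp[where g="Wf c" and h=h and h'=h1, OF dW h[OF Wp[OF that]]])
  have h1d: "(shifted (\<lambda>y t. h1 (Wf c y t)) dir y t has_real_derivative
        h2 (Wf c y t) * (case dir of None \<Rightarrow> 2 * c\<^sup>2 * t | Some j \<Rightarrow> - 2 * y $ j)) (at 0)"
    if "(y, t) \<in> ?S" for dir y t
    by (rule dcomp[where g="Wf c" and h=h1 and h'=h2, OF dW h1[OF Wp[OF that]]])
  have p0: "\<forall>y t. (y, t) \<in> ?S \<longrightarrow> partial None u y t = v0 y t"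
  proof (intro allI impI)
    fix y t assume yt: "(y, t) \<in> ?S"
    have "partial None u y t = h1 (Wf c y t) * (case (None :: 'n option) of None \<Rightarrow> 2 * c\<^sup>2 * t | Some j \<Rightarrow> - 2 * y $ j)"
      by (rule partial_eq[OF oS yt _ hd[OF yt]]) (use u in auto)
    then show "partial None u y t = v0 y t" by (simp add: v0_def)
  qed
  have pj: "\<forall>y t. (y, t) \<in> ?S \<longrightarrow> partial (Some j) u y t = vj j y t" for j
  proof (intro allI impI)
    fix y t assume yt: "(y, t) \<in> ?S"
    have "partial (Some j) u y t = h1 (Wf c y t) * (case Some j of None \<Rightarrow> 2 * c\<^sup>2 * t | Some j \<Rightarrow> - 2 * y $ j)"
      by (rule partial_eq[OF oS yt _ hd[OF yt]]) (use u in auto)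
    then show "partial (Some j) u y t = vj j y t" by (simp add: vj_def)
  qed
  have p00: "partial None (partial None u) y t = 2 * c\<^sup>2 * (h1 (Wf c y t) + t * (h2 (Wf c y t) * (2 * c\<^sup>2 * t)))"
  proof -
    have "(shifted v0 None y t has_real_derivative
        2 * c\<^sup>2 * (1 * h1 (Wf c y t) + (h2 (Wf c y t) * (2 * c\<^sup>2 * t)) * t)) (at 0)"
      unfolding v0_def using DERIV_cmult[OF dmult[OF dtime[of None] h1d[OF yt, of None]], of "2 * c\<^sup>2"]
      by (simp add: shifted_eq case_prod_beta)
    then show ?thesis
      by (intro partial_eq[OF oS yt]) (use p0 in \<open>auto simp: algebra_simps\<close>)
  qed
  have pjj: "partial (Some j) (partial (Some j) u) y t = -2 * (h1 (Wf c y t) + y $ j * (h2 (Wf c y t) * (- 2 * y $ j)))" for j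
  proof -
    have "(shifted (vj j) (Some j) y t has_real_derivative
        -2 * (1 * h1 (Wf c y t) + (h2 (Wf c y t) * (- 2 * y $ j)) * y $ j)) (at 0)"
      unfolding vj_def using DERIV_cmult[OF dmult[OF dcoord[of j "Some j"] h1d[OF yt, of "Some j"]], of "-2"]
      by (simp add: shifted_eq case_prod_beta)
    then show ?thesis
      by (intro partial_eq[OF oS yt]) (use pj in \<open>auto simp: algebra_simps\<close>)
  qed
  have "(\<Sum>j\<in>UNIV. partial (Some j) (partial (Some j) u) y t) =
      (\<Sum>j\<in>UNIV. -2 * h1 (Wf c y t) + 4 * h2 (Wf c y t) * (y $ j * y $ j))"
    by (rule sum.cong) (auto simp: pjj algebra_simps)
  also have "\<dots> = - 2 * real CARD('n) * h1 (Wf c y t) + 4 * h2 (Wf c y t) * (norm y)\<^sup>2"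
  proof -
    have "(\<Sum>j\<in>UNIV. -2 * h1 (Wf c y t) + 4 * h2 (Wf c y t) * (y $ j * y $ j)) =
        (\<Sum>j::'n\<in>UNIV. -2 * h1 (Wf c y t)) + (\<Sum>j\<in>UNIV. 4 * h2 (Wf c y t) * (y $ j * y $ j))"
      by (simp only: sum.distrib)
    also have "(\<Sum>j\<in>UNIV. 4 * h2 (Wf c y t) * (y $ j * y $ j)) = 4 * h2 (Wf c y t) * (norm y)\<^sup>2"
      by (simp only: norm_sq_sum sum_distrib_left)
    finally show ?thesis by simp
  qed
  finally have "(\<Sum>j\<in>UNIV. partial (Some j) (partial (Some j) u) y t) =
      - 2 * real CARD('n) * h1 (Wf c y t) + 4 * h2 (Wf c y t) * (norm y)\<^sup>2" .
  note sumeq = this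
  show ?thesis unfolding KG_def p00 sumeq
    by (simp add: Wf_def algebra_simps power2_eq_square)
qed



lemma rGamma_real_pos: "x > 0 \<Longrightarrow> rGamma (x::real) > 0"
  by (simp add: rGamma_inverse_Gamma)

lemma inv_aux: "inverse (inverse (P::real) * s * F) = P / (s * F)"
  by (simp add: inverse_mult_distrib divide_inverse)

lemma E0_bound:
  fixes N k :: nat
  assumes N: "N \<ge> 1" and k: "k \<ge> 1"
  defines "n \<equiv> real N / 2"
  shows "rGamma (real (Suc k) * n) * rGamma (real (Suc k) * n + n + 1/2) \<le> real N * 2 ^ (N * Suc k) / fact k"
proof -
  define m where "m = real (Suc k) * n"
  have n_ge: "n \<ge> 1/2" using N by (simp add: n_def)
  have m1: "m \<ge> 1"
  proof -
    have "real (Suc k) \<ge> 2" using k by simp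
    then have "real (Suc k) * n \<ge> 2 * (1/2)" using n_ge by (intro mult_mono) auto
    then show ?thesis by (simp add: m_def)
  qed
  have A: "rGamma m = m * rGamma (m + 1)" using rGamma_plus1[of m] by simp
  have B: "rGamma (m + n + 1/2) \<le> rGamma (m + 1/2)"
  proof -
    have "Gamma (m + 1/2) < Gamma (m + n + 1/2)"
      using m1 n_ge by (intro Gamma_real_strict_mono) auto
    moreover have "Gamma (m + 1/2) > 0" using m1 by simp
    ultimately show ?thesis by (simp add: rGamma_inverse_Gamma le_imp_inverse_le)
  qed
  have two_m: "2 * m = real (N * Suc k)" by (simp add: m_def n_def algebra_simps)
  have D: "Gamma (2 * m + 1) = fact (N * Suc k)"
    using Gamma_fact[of "N * Suc k", where 'a=real] by (simp add: two_m add.commute)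
  have C: "rGamma (m + 1/2) * rGamma (m + 1) = 2 ^ (N * Suc k) / (sqrt pi * fact (N * Suc k))"
  proof -
    have "Gamma (m + 1/2) * Gamma (m + 1) = 2 powr (- 2 * m) * sqrt pi * Gamma (2 * m + 1)"
      using m1 by (intro Gamma_dup_real) auto
    then have "rGamma (m + 1/2) * rGamma (m + 1) = inverse (2 powr (- 2 * m) * sqrt pi * Gamma (2 * m + 1))"
      by (simp add: rGamma_inverse_Gamma flip: inverse_mult_distrib)
    also have "2 powr (- 2 * m) = inverse (2 ^ (N * Suc k))"
    proof -
      have "2 powr (- 2 * m) = 2 powr (- (2 * m))" by simp
      also have "\<dots> = inverse (2 powr (2 * m))" by (rule powr_minus)
      also have "2 powr (2 * m) = (2::real) ^ (N * Suc k)" unfolding two_m by (rule powr_realpow) simp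
      finally show ?thesis .
    qed
    finally show ?thesis unfolding D inv_aux .
  qed
  have E: "fact (N * Suc k) \<ge> (fact (Suc k) :: real)"
  proof -
    have "1 * Suc k \<le> N * Suc k" using N by (rule mult_le_mono1)
    then show ?thesis by (intro fact_mono) simp
  qed
  have pos1: "rGamma (m + 1) > 0" "rGamma (m + n + 1/2) > 0" "rGamma (m + 1/2) > 0"
    using m1 n_ge by (auto intro!: rGamma_real_pos)
  have "rGamma m * rGamma (m + n + 1/2) = m * rGamma (m + 1) * rGamma (m + n + 1/2)" using A by simp
  also have "\<dots> \<le> m * rGamma (m + 1) * rGamma (m + 1/2)"
    using B pos1 m1 by (intro mult_left_mono) auto
  also have "\<dots> = m * 2 ^ (N * Suc k) / (sqrt pi * fact (N * Suc k))" using C by (simp add: algebra_simps)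
  also have "\<dots> \<le> m * 2 ^ (N * Suc k) / (1 * fact (Suc k))"
  proof -
    have "sqrt pi \<ge> 1" using pi_gt3 by (simp add: real_le_rsqrt)
    then have "1 * fact (Suc k) \<le> sqrt pi * (fact (N * Suc k) :: real)"
      using E by (intro mult_mono) auto
    then show ?thesis using m1 by (intro divide_left_mono mult_nonneg_nonneg mult_pos_pos) auto
  qed
  also have "\<dots> = n * 2 ^ (N * Suc k) / fact k"
    by (simp add: m_def field_simps del: of_nat_Suc)
  also have "\<dots> \<le> real N * 2 ^ (N * Suc k) / fact k"
    by (intro divide_right_mono mult_right_mono) (auto simp: n_def)
  finally show ?thesis by (simp add: m_def)
qed

definition Ec :: "nat \<Rightarrow> real \<Rightarrow> real \<Rightarrow> nat \<Rightarrow> nat \<Rightarrow> real" where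
  "Ec N c lam j k = (4 * c\<^sup>2) ^ j * ((lam / (2 * c)) ^ N) ^ Suc k *
     rGamma (real (Suc k) * (real N / 2) - real j) *
     rGamma (real (Suc k) * (real N / 2) + real N / 2 + 1/2 - real j)"

lemma entire_E0:
  assumes N: "N \<ge> 1"
  shows "entire (Ec N c lam 0)"
  unfolding entire_def
proof
  fix z :: real
  define q where "q = (lam / (2 * c)) ^ N"
  define X where "X = \<bar>q\<bar> * 2 ^ N * \<bar>z\<bar>"
  define K where "K = real N * \<bar>q\<bar> * 2 ^ N"
  have sg: "summable (\<lambda>k. K * (inverse (fact k) * X ^ k))"
    by (intro summable_mult summable_exp)
  show "summable (\<lambda>k. Ec N c lam 0 k * z ^ k)"
  proof (rule summable_comparison_test'[OF sg, of 1])
    fix k :: nat assume k: "k \<ge> 1"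
    have nn: "rGamma (real (Suc k) * (real N / 2)) \<ge> 0" "rGamma (real (Suc k) * (real N / 2) + real N / 2 + 1/2) \<ge> 0"
  proof -
    have p: "0 < real (Suc k) * (real N / 2)" using N by simp
    then have "0 < real (Suc k) * (real N / 2) + real N / 2 + 1/2" by simp
    then show "rGamma (real (Suc k) * (real N / 2)) \<ge> 0" "rGamma (real (Suc k) * (real N / 2) + real N / 2 + 1/2) \<ge> 0"
      using p by (auto intro!: less_imp_le rGamma_real_pos)
  qed
    have "norm (Ec N c lam 0 k * z ^ k) = \<bar>q\<bar> ^ Suc k * (rGamma (real (Suc k) * (real N / 2)) *
        rGamma (real (Suc k) * (real N / 2) + real N / 2 + 1/2)) * \<bar>z\<bar> ^ k"
      using nn by (simp add: Ec_def q_def abs_mult power_abs)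
    also have "\<dots> \<le> \<bar>q\<bar> ^ Suc k * (real N * 2 ^ (N * Suc k) / fact k) * \<bar>z\<bar> ^ k"
      using E0_bound[OF N k] by (intro mult_right_mono mult_left_mono) auto
    also have "\<dots> = K * (inverse (fact k) * X ^ k)"
      by (simp add: K_def X_def power_mult power_mult_distrib power_add field_simps)
    finally show "norm (Ec N c lam 0 k * z ^ k) \<le> K * (inverse (fact k) * X ^ k)" .
  qed
qed

lemma entire_scale: "entire a \<Longrightarrow> entire (\<lambda>k. C * a k)"
  unfolding entire_def by (auto simp: mult.assoc intro: summable_mult)

lemma Ec_Suc:
  "Ec N c lam (Suc j) k = 4 * c\<^sup>2 * dco (real N / 2) (real N / 2 - 1 - real j + real N / 2 + 1/2)
      (dco (real N / 2) (real N / 2 - 1 - real j) (Ec N c lam j)) k"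
proof -
  define x where "x = real (Suc k) * (real N / 2) - real j"
  define y where "y = real (Suc k) * (real N / 2) + real N / 2 + 1/2 - real j"
  have r1: "rGamma (x - 1) = (x - 1) * rGamma x" using rGamma_plus1[of "x - 1"] by simp
  have r2: "rGamma (y - 1) = (y - 1) * rGamma y" using rGamma_plus1[of "y - 1"] by simp
  have ex: "real (Suc k) * (real N / 2) - real (Suc j) = x - 1" by (simp add: x_def)
  have ey: "real (Suc k) * (real N / 2) + real N / 2 + 1/2 - real (Suc j) = y - 1" by (simp add: y_def)
  have "Ec N c lam (Suc j) k = (4 * c\<^sup>2) ^ Suc j * ((lam / (2 * c)) ^ N) ^ Suc k * rGamma (x - 1) * rGamma (y - 1)"
    unfolding Ec_def ex ey ..
  also have "\<dots> = 4 * c\<^sup>2 * ((x - 1) * (y - 1)) * Ec N c lam j k"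
    unfolding r1 r2 Ec_def x_def[symmetric] y_def[symmetric] by (simp add: algebra_simps)
  also have "(x - 1) * (y - 1) = (real k * (real N / 2) + (real N / 2 - 1 - real j + real N / 2 + 1/2)) *
       (real k * (real N / 2) + (real N / 2 - 1 - real j))"
    unfolding x_def y_def by (simp add: field_simps)
  finally show ?thesis by (simp only: dco_def mult.assoc)
qed

lemma entire_Ec: "N \<ge> 1 \<Longrightarrow> entire (Ec N c lam j)"
proof (induction j)
  case 0 then show ?case by (rule entire_E0)
next
  case (Suc j)
  have "Ec N c lam (Suc j) = (\<lambda>k. 4 * c\<^sup>2 * dco (real N / 2) (real N / 2 - 1 - real j + real N / 2 + 1/2)
      (dco (real N / 2) (real N / 2 - 1 - real j) (Ec N c lam j)) k)"
    by (rule ext) (rule Ec_Suc)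
  then show ?case using Suc by (simp add: entire_scale entire_dco)
qed

lemma GS_lin:
  assumes "entire a1" "entire a2"
  shows "\<alpha> * GS n a1 b w + \<beta> * GS n a2 b w = GS n (\<lambda>k. \<alpha> * a1 k + \<beta> * a2 k) b w"
proof -
  define z where "z = w powr n"
  have s1: "summable (\<lambda>k. a1 k * z ^ k)" "summable (\<lambda>k. a2 k * z ^ k)"
    using assms unfolding entire_def by auto
  have "(\<lambda>k. \<alpha> * (a1 k * z ^ k) + \<beta> * (a2 k * z ^ k)) sums (\<alpha> * (\<Sum>k. a1 k * z ^ k) + \<beta> * (\<Sum>k. a2 k * z ^ k))"
    by (intro sums_add sums_mult summable_sums s1)
  then have "(\<Sum>k. (\<alpha> * a1 k + \<beta> * a2 k) * z ^ k) = \<alpha> * (\<Sum>k. a1 k * z ^ k) + \<beta> * (\<Sum>k. a2 k * z ^ k)"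
    by (simp add: sums_iff algebra_simps)
  then show ?thesis unfolding GS_def z_def[symmetric] by (simp add: algebra_simps)
qed

lemma GS_mulw: "w > 0 \<Longrightarrow> w * GS n a (b - 2) w = GS n a (b - 1) w"
proof -
  assume w: "w > 0"
  have w1: "w powr 1 = w" using w by simp
  have "w * w powr (b - 2) = w powr 1 * w powr (b - 2)" by (simp only: w1)
  also have "\<dots> = w powr (1 + (b - 2))" by (rule powr_add[symmetric])
  also have "1 + (b - 2) = b - 1" by simp
  finally have "w * w powr (b - 2) = w powr (b - 1)" .
  then show ?thesis unfolding GS_def by (simp add: mult.assoc[symmetric])
qed



lemma GS_cong: "(\<And>k. a k = a' k) \<Longrightarrow> GS n a b w = GS n a' b w"
  by (simp add: GS_def)

lemma Lstep:
  assumes w: "w > 0" and a: "entire a" and d: "D = 2 * n + 2"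
  shows "4 * c\<^sup>2 * w * GS n (dco n (b - 1) (dco n b a)) (b - 2) w + 2 * c\<^sup>2 * (D + 1) * GS n (dco n b a) (b - 1) w
       = GS n (\<lambda>k. 4 * c\<^sup>2 * dco n (b + n + 1/2) (dco n b a) k) (b - 1) w"
proof -
  have e1: "entire (dco n (b - 1) (dco n b a))" "entire (dco n b a)" using a by (auto intro: entire_dco)
  have "4 * c\<^sup>2 * w * GS n (dco n (b - 1) (dco n b a)) (b - 2) w =
      4 * c\<^sup>2 * GS n (dco n (b - 1) (dco n b a)) (b - 1) w"
    using GS_mulw[OF w] by (simp add: mult.assoc)
  then have "4 * c\<^sup>2 * w * GS n (dco n (b - 1) (dco n b a)) (b - 2) w + 2 * c\<^sup>2 * (D + 1) * GS n (dco n b a) (b - 1) w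
      = 4 * c\<^sup>2 * GS n (dco n (b - 1) (dco n b a)) (b - 1) w + 2 * c\<^sup>2 * (D + 1) * GS n (dco n b a) (b - 1) w"
    by simp
  also have "\<dots> = GS n (\<lambda>k. 4 * c\<^sup>2 * dco n (b - 1) (dco n b a) k + 2 * c\<^sup>2 * (D + 1) * dco n b a k) (b - 1) w"
    by (rule GS_lin[OF e1])
  also have "\<dots> = GS n (\<lambda>k. 4 * c\<^sup>2 * dco n (b + n + 1/2) (dco n b a) k) (b - 1) w"
    by (rule GS_cong) (simp add: dco_def d field_simps)
  finally show ?thesis .
qed

lemma KG_iter:
  fixes u :: "real ^ 'n \<Rightarrow> real \<Rightarrow> real" and c lam :: real
  defines "N \<equiv> CARD('n) - 2"
  defines "n \<equiv> real N / 2"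
  assumes dim: "CARD('n) \<ge> 3" and c: "c > 0"
    and base: "\<forall>y t. (y, t) \<in> Sreg c \<longrightarrow> u y t = GS n (Ec N c lam 0) (n - 1) (Wf c y t)"
  shows "\<forall>y t. (y, t) \<in> Sreg c \<longrightarrow> (KG c ^^ j) u y t = GS n (Ec N c lam j) (n - 1 - real j) (Wf c y t)"
proof (induction j)
  case 0 then show ?case using base by simp
next
  case (Suc j)
  have N1: "N \<ge> 1" using dim by (simp add: N_def)
  have dn: "real CARD('n) = 2 * n + 2" using dim by (simp add: n_def N_def of_nat_diff field_simps)
  define b where "b = n - 1 - real j"
  define a where "a = Ec N c lam j"
  have ea: "entire a" unfolding a_def using N1 by (rule entire_Ec)
  show ?case
  proof (intro allI impI)
    fix y t assume yt: "(y, t) \<in> (Sreg c :: ((real ^ 'n) \<times> real) set)"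
    have "(KG c ^^ Suc j) u y t = KG c ((KG c ^^ j) u) y t" by simp
    also have "\<dots> = 4 * c\<^sup>2 * Wf c y t * GS n (dco n (b - 1) (dco n b a)) (b - 2) (Wf c y t)
         + 2 * c\<^sup>2 * (real CARD('n) + 1) * GS n (dco n b a) (b - 1) (Wf c y t)"
    proof (rule KG_comp[OF c _ _ _ yt])
      show "\<And>x. 0 < x \<Longrightarrow> (GS n a b has_real_derivative GS n (dco n b a) (b - 1) x) (at x)"
        by (rule GS_deriv[OF ea])
      show "\<And>x. 0 < x \<Longrightarrow> (GS n (dco n b a) (b - 1) has_real_derivative GS n (dco n (b - 1) (dco n b a)) (b - 2) x) (at x)"
      proof -
        fix x :: real assume x: "0 < x"
        have "(GS n (dco n b a) (b - 1) has_real_derivative GS n (dco n (b - 1) (dco n b a)) (b - 1 - 1) x) (at x)"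
          by (rule GS_deriv[OF entire_dco[OF ea] x])
        moreover have "b - 1 - 1 = b - 2" by simp
        ultimately show "(GS n (dco n b a) (b - 1) has_real_derivative GS n (dco n (b - 1) (dco n b a)) (b - 2) x) (at x)"
          by simp
      qed
      show "\<forall>y t. (y, t) \<in> Sreg c \<longrightarrow> (KG c ^^ j) u y t = GS n a b (Wf c y t)"
        using Suc.IH by (simp add: a_def b_def)
    qed
    also have "\<dots> = GS n (\<lambda>k. 4 * c\<^sup>2 * dco n (b + n + 1/2) (dco n b a) k) (b - 1) (Wf c y t)"
      by (rule Lstep[OF Wf_pos[OF yt c] ea dn])
    also have "\<dots> = GS n (Ec N c lam (Suc j)) (n - 1 - real (Suc j)) (Wf c y t)"
    proof -
      have e1: "b - 1 = n - 1 - real (Suc j)" by (simp add: b_def)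
      have e2: "(\<lambda>k. 4 * c\<^sup>2 * dco n (b + n + 1/2) (dco n b a) k) = Ec N c lam (Suc j)"
        by (rule ext) (simp add: Ec_Suc a_def b_def n_def algebra_simps)
      show ?thesis by (simp only: e1 e2)
    qed
    finally show "(KG c ^^ Suc j) u y t = GS n (Ec N c lam (Suc j)) (n - 1 - real (Suc j)) (Wf c y t)" .
  qed
qed

lemma coef_id: "c > 0 \<Longrightarrow> (4 * c\<^sup>2) ^ N * ((lam / (2 * c)) ^ N) ^ 2 = (lam::real) ^ (2 * N)"
proof -
  assume c: "c > 0"
  have "(4 * c\<^sup>2) ^ N * ((lam / (2 * c)) ^ N) ^ 2 = ((2 * c)\<^sup>2 * (lam / (2 * c))\<^sup>2) ^ N"
    by (simp add: power_mult_distrib power_mult[symmetric] mult.commute)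
  also have "(2 * c)\<^sup>2 * (lam / (2 * c))\<^sup>2 = lam\<^sup>2" using c by (simp add: power_divide)
  finally show ?thesis by (simp add: power_mult)
qed

lemma final_id:
  fixes N :: nat and c lam w :: real
  assumes N1: "N \<ge> 1" and c: "c > 0" and w: "w > 0"
  defines "n \<equiv> real N / 2"
  shows "GS n (Ec N c lam N) (n - 1 - real N) w =
     lam ^ (2 * N) * GS n (Ec N c lam 0) (n - 1) w
     + (2 * lam * c) ^ N * (w powr (- (real N + 2) / 2) / (sqrt pi * Gamma (1 - (real N + 2) / 2)))"
proof -
  define z where "z = w powr n"
  define q where "q = (lam / (2 * c)) ^ N"
  define f where "f = (\<lambda>k. Ec N c lam N k * z ^ k)"
  define P0 where "P0 = (\<Sum>k. Ec N c lam 0 k * z ^ k)"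
  have sP0: "(\<lambda>k. Ec N c lam 0 k * z ^ k) sums P0"
    unfolding P0_def using entire_Ec[OF N1, of c lam 0] unfolding entire_def by (intro summable_sums) auto
  have N2: "real N = 2 * n" by (simp add: n_def)
  have fSS: "f (Suc (Suc k)) = lam ^ (2 * N) * z\<^sup>2 * (Ec N c lam 0 k * z ^ k)" for k
  proof -
    have a1: "real (Suc (Suc (Suc k))) * (real N / 2) - real N = real (Suc k) * (real N / 2)"
      by (simp add: algebra_simps)
    have a2: "real (Suc (Suc (Suc k))) * (real N / 2) + real N / 2 + 1/2 - real N =
        real (Suc k) * (real N / 2) + real N / 2 + 1/2"
      by (simp add: algebra_simps)
    have "Ec N c lam N (Suc (Suc k)) = ((4 * c\<^sup>2) ^ N * q ^ 2) * Ec N c lam 0 k"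
      unfolding Ec_def a1 a2 q_def by (simp add: power_add power2_eq_square algebra_simps)
    also have "(4 * c\<^sup>2) ^ N * q ^ 2 = lam ^ (2 * N)" unfolding q_def by (rule coef_id[OF c])
    finally show ?thesis by (simp add: f_def power_add power2_eq_square algebra_simps)
  qed
  have f1: "f (Suc 0) = 0"
  proof -
    have "real (Suc 1) * (real N / 2) - real N = 0" by simp
    then show ?thesis by (simp add: f_def Ec_def)
  qed
  have f0: "f 0 = (2 * lam * c) ^ N * rGamma (- n) * rGamma (1/2)"
  proof -
    have b1: "real (Suc 0) * (real N / 2) - real N = - n" by (simp add: n_def)
    have b2: "real (Suc 0) * (real N / 2) + real N / 2 + 1/2 - real N = 1/2" by simp
    have "(4 * c\<^sup>2) ^ N * q = (2 * lam * c) ^ N"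
    proof -
      have "(4 * c\<^sup>2) ^ N * q = (4 * c\<^sup>2 * (lam / (2 * c))) ^ N"
        unfolding q_def by (rule power_mult_distrib[symmetric])
      also have "4 * c\<^sup>2 * (lam / (2 * c)) = 2 * lam * c" using c by (simp add: power2_eq_square field_simps)
      finally show ?thesis .
    qed
    then show ?thesis unfolding f_def Ec_def b1 b2 by (simp add: q_def)
  qed
  have "(\<lambda>k. f (Suc (Suc k))) sums (lam ^ (2 * N) * z\<^sup>2 * P0)"
    unfolding fSS by (intro sums_mult sP0)
  then have "(\<lambda>k. f (Suc k)) sums (lam ^ (2 * N) * z\<^sup>2 * P0 + f 1)"
    by (subst (asm) sums_Suc_iff) simp
  then have "f sums (lam ^ (2 * N) * z\<^sup>2 * P0 + f 1 + f 0)"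
    by (subst (asm) sums_Suc_iff) simp
  then have sf: "suminf f = lam ^ (2 * N) * z\<^sup>2 * P0 + (2 * lam * c) ^ N * rGamma (- n) * rGamma (1/2)"
    by (simp add: sums_iff f1 f0)
  have wz: "w powr (n - 1 - real N) * z\<^sup>2 = w powr (n - 1)"
  proof -
    have "z\<^sup>2 = w powr (2 * n)" unfolding z_def using w by (simp add: powr_mult_base power2_eq_square powr_add[symmetric])
    then have "w powr (n - 1 - real N) * z\<^sup>2 = w powr ((n - 1 - real N) + 2 * n)" by (simp only: powr_add)
    also have "(n - 1 - real N) + 2 * n = n - 1" by (simp add: N2)
    finally show ?thesis .
  qed
  have e3: "- (real N + 2) / 2 = n - 1 - real N" by (simp add: n_def field_simps)
  have e4: "1 - (real N + 2) / 2 = - n" by (simp add: n_def field_simps)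
  have e5: "rGamma (1/2 :: real) = inverse (sqrt pi)" by (simp add: rGamma_inverse_Gamma Gamma_one_half_real)
  have "GS n (Ec N c lam N) (n - 1 - real N) w = w powr (n - 1 - real N) * suminf f"
    by (simp add: GS_def f_def z_def)
  also have "\<dots> = lam ^ (2 * N) * (w powr (n - 1 - real N) * z\<^sup>2) * P0 +
      (2 * lam * c) ^ N * (w powr (n - 1 - real N) * rGamma (- n) * rGamma (1/2))"
    unfolding sf by (simp add: algebra_simps)
  also have "\<dots> = lam ^ (2 * N) * GS n (Ec N c lam 0) (n - 1) w
     + (2 * lam * c) ^ N * (w powr (- (real N + 2) / 2) / (sqrt pi * Gamma (1 - (real N + 2) / 2)))"
    unfolding wz e3 e4 e5 by (simp add: GS_def P0_def z_def rGamma_inverse_Gamma divide_inverse inverse_mult_distrib)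
  finally show ?thesis .
qed



lemma term_eq:
  fixes N k :: nat and W c lam D :: real
  assumes W: "W > 0" and D: "D = real N + 2"
  defines "n \<equiv> real N / 2"
  shows "(lam / (2 * c)) ^ (Suc k * N) * sqrt W powr (real (Suc k * N) - 2) /
      (Gamma (real (Suc k) * (D / 2 - 1)) * Gamma ((D - 1) / 2 + (D / 2 - 1) * real (Suc k)))
    = Ec N c lam 0 k * (W powr n) ^ k * W powr (n - 1)"
proof -
  have e1: "D / 2 - 1 = n" by (simp add: D n_def field_simps)
  have e2: "(D - 1) / 2 + n * real (Suc k) = real (Suc k) * n + n + 1/2"
    by (simp add: D n_def field_simps)
  have e3: "sqrt W powr (real (Suc k * N) - 2) = W powr (real (Suc k) * n - 1)"
  proof -
    have "sqrt W powr (real (Suc k * N) - 2) = (W powr (1/2)) powr (real (Suc k * N) - 2)"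
      using W by (simp add: powr_half_sqrt)
    also have "\<dots> = W powr (1/2 * (real (Suc k * N) - 2))" by (rule powr_powr)
    also have "1/2 * (real (Suc k * N) - 2) = real (Suc k) * n - 1" by (simp add: n_def field_simps)
    finally show ?thesis .
  qed
  have e4: "(W powr n) ^ k * W powr (n - 1) = W powr (real (Suc k) * n - 1)"
  proof -
    have "(W powr n) ^ k * W powr (n - 1) = W powr (real k * n) * W powr (n - 1)"
      using W by (simp add: powr_power)
    also have "\<dots> = W powr (real k * n + (n - 1))" by (simp only: powr_add)
    also have "real k * n + (n - 1) = real (Suc k) * n - 1" by (simp add: algebra_simps)
    finally show ?thesis .
  qed
  have e5: "(lam / (2 * c)) ^ (Suc k * N) = ((lam / (2 * c)) ^ N) ^ Suc k"
    by (simp add: power_mult[symmetric] mult.commute power_add)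
  have E0: "Ec N c lam 0 k = ((lam / (2 * c)) ^ N) ^ Suc k * rGamma (real (Suc k) * n) * rGamma (real (Suc k) * n + n + 1/2)"
    by (simp add: Ec_def n_def)
  have "(lam / (2 * c)) ^ (Suc k * N) * sqrt W powr (real (Suc k * N) - 2) /
      (Gamma (real (Suc k) * (D / 2 - 1)) * Gamma ((D - 1) / 2 + (D / 2 - 1) * real (Suc k)))
    = ((lam / (2 * c)) ^ N) ^ Suc k * W powr (real (Suc k) * n - 1) /
      (Gamma (real (Suc k) * n) * Gamma (real (Suc k) * n + n + 1/2))"
    unfolding e1 e3 e5 unfolding e2 ..
  also have "\<dots> = Ec N c lam 0 k * ((W powr n) ^ k * W powr (n - 1))"
    unfolding e4 E0 rGamma_inverse_Gamma divide_inverse inverse_mult_distrib by (simp only: mult_ac)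
  finally show ?thesis by (simp only: mult.assoc)
qed

lemma Gamma_nat_arg: "Gamma (real N * real k + (real N + 1)) = fact (N * Suc k)"
proof -
  have e: "real N * real k + (real N + 1) = 1 + real (N * Suc k)" by (simp add: algebra_simps)
  have "Gamma (real N * real k + (real N + 1)) = Gamma (1 + real (N * Suc k))" by (simp only: e)
  also have "\<dots> = fact (N * Suc k)" by (rule Gamma_fact)
  finally show ?thesis .
qed

lemma M2_summable:
  fixes X :: real assumes N: "N \<ge> 1"
  shows "summable (\<lambda>k. X ^ k / Gamma (real N * real k + (real N + 1)))"
proof (rule summable_comparison_test'[OF summable_exp[of "\<bar>X\<bar>"], of 0])
  fix k :: nat
  have "fact k \<le> (fact (N * Suc k) :: real)"
  proof -
    have "1 * Suc k \<le> N * Suc k" using N by (rule mult_le_mono1)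
    then have "k \<le> N * Suc k" by simp
    then show ?thesis by (rule fact_mono)
  qed
  then have "\<bar>X\<bar> ^ k / fact (N * Suc k) \<le> \<bar>X\<bar> ^ k / fact k"
    by (intro divide_left_mono) auto
  then show "norm (X ^ k / Gamma (real N * real k + (real N + 1))) \<le> inverse (fact k) * \<bar>X\<bar> ^ k"
    by (simp add: Gamma_nat_arg abs_mult power_abs divide_inverse mult.commute)
qed

lemma M2_pos:
  fixes X :: real assumes N: "N \<ge> 1" and X: "X > 0"
  shows "(\<Sum>k. X ^ k / Gamma (real N * real k + (real N + 1))) > 0"
  by (rule suminf_pos[OF M2_summable[OF N]]) (simp add: Gamma_nat_arg X)

lemma M4_term:
  fixes x D :: real and N k :: nat
  assumes x: "x > 0" and D: "D = real N + 2"
  shows "((x / 2) powr (D - 2)) ^ k / (Gamma ((D / 2 - 1) * real k + D / 2) * Gamma ((D / 2 - 1) * real k + (D - 1) / 2))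
     = 2 ^ N / sqrt pi * ((x ^ N) ^ k / Gamma ((D - 2) * real k + (D - 1)))"
proof -
  define m where "m = real (Suc k) * (real N / 2)"
  have m0: "m \<ge> 0" by (simp add: m_def)
  have a1: "(D / 2 - 1) * real k + D / 2 = m + 1" by (simp add: m_def D field_simps)
  have a2: "(D / 2 - 1) * real k + (D - 1) / 2 = m + 1/2" by (simp add: m_def D field_simps)
  have a3: "(D - 2) * real k + (D - 1) = 2 * m + 1" by (simp add: m_def D field_simps)
  have a4: "(x / 2) powr (D - 2) = (x / 2) ^ N" using x by (simp add: D powr_realpow)
  have dup: "Gamma (m + 1/2) * Gamma (m + 1) = 2 powr (- 2 * m) * sqrt pi * Gamma (2 * m + 1)"
    by (rule Gamma_dup_real[OF m0])
  have p2: "2 powr (- 2 * m) = inverse (2 ^ N * 2 ^ (N * k))"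
  proof -
    have "2 powr (- 2 * m) = 2 powr (- (2 * m))" by simp
    also have "\<dots> = inverse (2 powr (2 * m))" by (rule powr_minus)
    also have "2 * m = real (N * Suc k)" by (simp add: m_def algebra_simps)
    also have "(2::real) powr real (N * Suc k) = 2 ^ (N * Suc k)" by (rule powr_realpow) simp
    also have "(2::real) ^ (N * Suc k) = 2 ^ N * 2 ^ (N * k)" by (simp add: power_add)
    finally show ?thesis .
  qed
  have G: "Gamma (2 * m + 1) > 0" using m0 by simp
  have "((x / 2) ^ N) ^ k = (x ^ N) ^ k / 2 ^ (N * k)"
    by (simp add: power_divide power_mult)
  then show ?thesis unfolding a1 a2 a3 a4 mult.commute[of "Gamma (m + 1)"] dup p2
    using G by (simp add: field_simps power_mult)
qed
lemma alg:
  fixes PI CN P s M2 Gk G B Tw cK tK lK Wp :: real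
  assumes "PI \<noteq> 0" "CN \<noteq> 0" "P \<noteq> 0" "s \<noteq> 0" "M2 \<noteq> 0" "Gk \<noteq> 0" "G \<noteq> 0" "B \<noteq> 0" "Tw \<noteq> 0" "cK \<noteq> 0" "tK \<noteq> 0"
  shows "PI * CN * (P / s * M2) * (((inverse (P * Tw) * s * G / B) / Gk * (Wp / (PI * (CN * (cK * tK))))) * (1 / M2 * ((lK * tK) / G)))
     = (lK / (Tw * cK)) * Wp / (Gk * B)"
  using assms by (simp add: field_simps)

lemma pcondPN:
  fixes d k :: nat and c t lam r :: real
  assumes d: "d \<ge> 3" and c: "c > 0" and t: "t > 0" and lam: "lam > 0" and r: "0 \<le> r" "r < c * t"
    and M2: "ML2 (real d - 2) (real d - 1) ((lam * t) ^ (d - 2)) \<noteq> 0"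
  shows "pi powr (real d / 2) * (c * t) powr (real d - 2) *
      (2 ^ (d - 2) / sqrt pi * ML2 (real d - 2) (real d - 1) ((lam * t) ^ (d - 2))) *
      (pcond d c r t (Suc k) * PN d lam t (Suc k))
    = (lam / (2 * c)) ^ (Suc k * (d - 2)) * sqrt (c\<^sup>2 * t\<^sup>2 - r\<^sup>2) powr (real (Suc k * (d - 2)) - 2) /
      (Gamma (real (Suc k) * (real d / 2 - 1)) * Gamma ((real d - 1) / 2 + (real d / 2 - 1) * real (Suc k)))"
proof -
  define N where "N = d - 2"
  define K where "K = Suc k"
  define n where "n = real N / 2"
  define M where "M = (real K + 1) * n"
  define W where "W = c\<^sup>2 * t\<^sup>2 - r\<^sup>2"
  define M2v where "M2v = ML2 (real d - 2) (real d - 1) ((lam * t) ^ (d - 2))"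
  have rd: "real d = real N + 2" using d by (simp add: N_def)
  have Wp: "W > 0"
  proof -
    have "r\<^sup>2 < (c * t)\<^sup>2" using r by (intro power_strict_mono) auto
    then show ?thesis by (simp add: W_def power_mult_distrib)
  qed
  have M0: "M \<ge> 0" by (simp add: M_def n_def)
  have hn: "real d / 2 - 1 = n" by (simp add: rd n_def field_simps)
  have hA: "(real K + 1) * n + 1 = M + 1" by (simp add: M_def)
  have hG: "(real d - 2) * real K + real d - 1 = 2 * M + 1" by (simp add: rd M_def n_def field_simps)
  have hB: "(real d - 1) / 2 + n * real K = M + 1/2" by (simp add: rd M_def n_def field_simps)
  have dup: "Gamma (M + 1/2) * Gamma (M + 1) = 2 powr (- 2 * M) * sqrt pi * Gamma (2 * M + 1)"
    by (rule Gamma_dup_real[OF M0])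
  have p2: "2 powr (- 2 * M) = inverse (2 ^ N * 2 ^ (N * K))"
  proof -
    have "2 powr (- 2 * M) = 2 powr (- (2 * M))" by simp
    also have "\<dots> = inverse (2 powr (2 * M))" by (rule powr_minus)
    also have "2 * M = real (N * K + N)" by (simp add: M_def n_def algebra_simps)
    also have "(2::real) powr real (N * K + N) = 2 ^ (N * K + N)" by (rule powr_realpow) simp
    also have "(2::real) ^ (N * K + N) = 2 ^ N * 2 ^ (N * K)" by (simp add: power_add)
    finally show ?thesis .
  qed
  have Bpos: "Gamma (M + 1/2) > 0" using M0 by simp
  have hAval: "Gamma (M + 1) = inverse (2 ^ N * 2 ^ (N * K)) * sqrt pi * Gamma (2 * M + 1) / Gamma (M + 1/2)"
    using dup Bpos unfolding p2 by (simp add: field_simps)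
  have hW: "W powr (real K * n - 1) = sqrt W powr (real (K * N) - 2)"
  proof -
    have "sqrt W powr (real (K * N) - 2) = (W powr (1/2)) powr (real (K * N) - 2)"
      using Wp by (simp add: powr_half_sqrt)
    also have "\<dots> = W powr (1/2 * (real (K * N) - 2))" by (rule powr_powr)
    also have "1/2 * (real (K * N) - 2) = real K * n - 1" by (simp add: n_def field_simps)
    finally show ?thesis ..
  qed
  have ct: "c * t > 0" using c t by simp
  have hCT: "(c * t) powr (2 * (real K + 1) * n) = (c * t) ^ N * (c ^ (N * K) * t ^ (N * K))"
  proof -
    have e: "2 * (real K + 1) * n = real (N * K + N)" by (simp add: n_def algebra_simps)
    have "(c * t) powr (2 * (real K + 1) * n) = (c * t) powr real (N * K + N)" by (simp only: e)
    also have "\<dots> = (c * t) ^ (N * K + N)" by (rule powr_realpow[OF ct])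
    finally show ?thesis by (simp add: power_add power_mult_distrib)
  qed
  have hCN: "(c * t) powr (real d - 2) = (c * t) ^ N"
  proof -
    have "real d - 2 = real N" by (simp add: rd)
    then show ?thesis using ct by (simp add: powr_realpow)
  qed
  have hX: "(lam * t) ^ (K * N) = lam ^ (K * N) * t ^ (N * K)" by (simp add: power_mult_distrib mult.commute)
  have hQ: "(lam / (2 * c)) ^ (K * N) = lam ^ (K * N) / (2 ^ (N * K) * c ^ (N * K))"
    by (simp add: power_divide power_mult_distrib mult.commute)
  have pc: "pcond d c r t K = Gamma (M + 1) / Gamma (real K * n) *
      (W powr (real K * n - 1) / (pi powr (real d / 2) * (c * t) powr (2 * (real K + 1) * n)))"
    unfolding pcond_def hn hA W_def using r by simp
  have pn: "PN d lam t K = 1 / M2v * ((lam * t) ^ (K * N) / Gamma (2 * M + 1))"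
    unfolding PN_def M2v_def N_def[symmetric] hG[symmetric] by (simp add: algebra_simps)
  have lhs: "pi powr (real d / 2) * (c * t) powr (real d - 2) * (2 ^ N / sqrt pi * M2v) * (pcond d c r t K * PN d lam t K)
     = pi powr (real d / 2) * (c * t) ^ N * (2 ^ N / sqrt pi * M2v) *
       (((inverse (2 ^ N * 2 ^ (N * K)) * sqrt pi * Gamma (2 * M + 1) / Gamma (M + 1/2)) / Gamma (real K * n) *
        (sqrt W powr (real (K * N) - 2) / (pi powr (real d / 2) * ((c * t) ^ N * (c ^ (N * K) * t ^ (N * K)))))) *
       (1 / M2v * ((lam ^ (K * N) * t ^ (N * K)) / Gamma (2 * M + 1))))"
    unfolding pc pn hCN hAval hW hCT hX ..
  also have "\<dots> = (lam ^ (K * N) / (2 ^ (N * K) * c ^ (N * K))) * sqrt W powr (real (K * N) - 2) / (Gamma (real K * n) * Gamma (M + 1/2))"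
  proof (rule alg)
    have "real K * n > 0" using d by (simp add: K_def n_def N_def)
    from Gamma_real_pos[OF this] show "Gamma (real K * n) \<noteq> 0" by simp
    have "2 * M + 1 > 0" "M + 1/2 > 0" using M0 by simp_all
    from Gamma_real_pos[OF this(1)] Gamma_real_pos[OF this(2)]
    show "Gamma (2 * M + 1) \<noteq> 0" "Gamma (M + 1/2) \<noteq> 0" by simp_all
  qed (use M2 c t in \<open>auto simp: M2v_def\<close>)
  also have "\<dots> = (lam / (2 * c)) ^ (K * N) * sqrt W powr (real (K * N) - 2) /
      (Gamma (real K * (real d / 2 - 1)) * Gamma ((real d - 1) / 2 + (real d / 2 - 1) * real K))"
    unfolding hQ hn hB ..
  finally show ?thesis by (simp add: K_def N_def M2v_def W_def)
qed



lemma ML4_eq: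
  fixes x :: real and d :: nat
  assumes x: "x > 0" and d: "d \<ge> 3"
  shows "ML4 (real d / 2 - 1) (real d / 2) (real d / 2 - 1) ((real d - 1) / 2) ((x / 2) powr (real d - 2))
     = 2 ^ (d - 2) / sqrt pi * ML2 (real d - 2) (real d - 1) (x ^ (d - 2))"
proof -
  define N where "N = d - 2"
  have D: "real d = real N + 2" using d by (simp add: N_def)
  have e1: "real d - 2 = real N" "real d - 1 = real N + 1" using D by simp_all
  have sm: "summable (\<lambda>k. (x ^ N) ^ k / Gamma ((real d - 2) * real k + (real d - 1)))"
    unfolding e1 using M2_summable[of N "x ^ N"] d by (simp add: N_def)
  have "ML4 (real d / 2 - 1) (real d / 2) (real d / 2 - 1) ((real d - 1) / 2) ((x / 2) powr (real d - 2))
      = (\<Sum>k. 2 ^ N / sqrt pi * ((x ^ N) ^ k / Gamma ((real d - 2) * real k + (real d - 1))))"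
    unfolding ML4_def by (simp only: M4_term[OF x D])
  also have "\<dots> = 2 ^ N / sqrt pi * (\<Sum>k. (x ^ N) ^ k / Gamma ((real d - 2) * real k + (real d - 1)))"
    by (rule suminf_mult[OF sm])
  finally show ?thesis by (simp add: ML2_def N_def)
qed

lemma ML2_pos:
  fixes x :: real and d :: nat
  assumes x: "x > 0" and d: "d \<ge> 3"
  shows "ML2 (real d - 2) (real d - 1) (x ^ (d - 2)) > 0"
proof -
  define N where "N = d - 2"
  have D: "real d = real N + 2" using d by (simp add: N_def)
  have e1: "real d - 2 = real N" "real d - 1 = real N + 1" using D by simp_all
  show ?thesis unfolding ML2_def e1 N_def[symmetric]
    using M2_pos[of N "x ^ N"] d x by (simp add: N_def)
qed

lemma fY_point:
  fixes c lam :: real and y :: "real ^ 'n" and t :: real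
  defines "N \<equiv> CARD('n) - 2"
  defines "n \<equiv> real N / 2"
  assumes dim: "CARD('n) \<ge> 3" and c: "c > 0" and lam: "lam > 0" and yt: "(y, t) \<in> Sreg c"
  shows "(\<lambda>k. (lam / (2 * c)) ^ (Suc k * (CARD('n) - 2)) *
              sqrt (c\<^sup>2 * t\<^sup>2 - (norm y)\<^sup>2) powr (real (Suc k * (CARD('n) - 2)) - 2) /
              (Gamma (real (Suc k) * (real CARD('n) / 2 - 1)) *
               Gamma ((real CARD('n) - 1) / 2 + (real CARD('n) / 2 - 1) * real (Suc k))))
        sums fY c lam y t"
    and "fY c lam y t = GS n (Ec N c lam 0) (n - 1) (Wf c y t)"
proof -
  let ?d = "CARD('n)"
  define T where "T = (\<lambda>k. (lam / (2 * c)) ^ (Suc k * (CARD('n) - 2)) *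
              sqrt (c\<^sup>2 * t\<^sup>2 - (norm y)\<^sup>2) powr (real (Suc k * (CARD('n) - 2)) - 2) /
              (Gamma (real (Suc k) * (real CARD('n) / 2 - 1)) *
               Gamma ((real CARD('n) - 1) / 2 + (real CARD('n) / 2 - 1) * real (Suc k))))"
  have t: "t > 0" and r: "norm y < c * t" using yt by (auto simp: Sreg_def)
  have N1: "N \<ge> 1" using dim by (simp add: N_def)
  have D: "real ?d = real N + 2" using dim by (simp add: N_def)
  define W where "W = Wf c y t"
  have Wp: "W > 0" unfolding W_def by (rule Wf_pos[OF yt c])
  define z where "z = W powr n"
  have Teq: "T k = Ec N c lam 0 k * z ^ k * W powr (n - 1)" for k
    unfolding T_def N_def[symmetric] z_def n_def
    using term_eq[OF Wp D, of lam c k] by (simp add: W_def Wf_def)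
  have sP0: "(\<lambda>k. Ec N c lam 0 k * z ^ k) sums (\<Sum>k. Ec N c lam 0 k * z ^ k)"
    using entire_Ec[OF N1, of c lam 0] unfolding entire_def by (intro summable_sums) auto
  have sT: "T sums GS n (Ec N c lam 0) (n - 1) W"
    using sums_mult2[OF sP0, of "W powr (n - 1)"] unfolding GS_def z_def[symmetric] Teq
    by (simp add: mult.commute)
  define M2 where "M2 = ML2 (real ?d - 2) (real ?d - 1) ((lam * t) ^ (?d - 2))"
  have M2p: "M2 > 0" unfolding M2_def using lam t dim by (intro ML2_pos) auto
  define C where "C = pi powr (real ?d / 2) * (c * t) powr (real ?d - 2) * (2 ^ (?d - 2) / sqrt pi * M2)"
  have Cnz: "C \<noteq> 0" using M2p c t by (simp add: C_def)
  have ML4v: "ML4 (real ?d / 2 - 1) (real ?d / 2) (real ?d / 2 - 1) ((real ?d - 1) / 2) ((lam * t / 2) powr (real ?d - 2))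
      = 2 ^ (?d - 2) / sqrt pi * M2"
    unfolding M2_def using lam t dim by (intro ML4_eq) auto
  have pp: "pcond ?d c (norm y) t (Suc k) * PN ?d lam t (Suc k) = T k / C" for k
  proof -
    have "C * (pcond ?d c (norm y) t (Suc k) * PN ?d lam t (Suc k)) = T k"
      unfolding C_def M2_def T_def using pcondPN[OF dim c t lam norm_ge_zero r, of k] M2p
      by (simp add: M2_def)
    then show ?thesis using Cnz by (simp add: field_simps)
  qed
  have sTC: "summable (\<lambda>k. T k / C)" using sT by (intro summable_divide) (simp add: sums_iff)
  have "fY c lam y t = C * pY c lam y t"
    unfolding fY_def Let_def ML4v C_def by simp
  also have "pY c lam y t = (\<Sum>k. T k / C)" unfolding pY_def pp ..
  also have "\<dots> = (\<Sum>k. T k) / C" using sT by (intro suminf_divide) (simp add: sums_iff)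
  also have "C * ((\<Sum>k. T k) / C) = (\<Sum>k. T k)" using Cnz by simp
  finally have fv: "fY c lam y t = (\<Sum>k. T k)" .
  then have "fY c lam y t = GS n (Ec N c lam 0) (n - 1) W" using sT by (simp add: sums_iff)
  then show "fY c lam y t = GS n (Ec N c lam 0) (n - 1) (Wf c y t)" by (simp add: W_def)
  show "T sums fY c lam y t" using sT fv by (simp add: sums_iff)
qed



lemma Smv_Wf: "Smv m S (Wf c :: real ^ 'n \<Rightarrow> real \<Rightarrow> real)"
proof -
  have eq: "Wf c = (\<lambda>(y :: real ^ 'n) t. c\<^sup>2 * (t * t) + (-1) * (\<Sum>i\<in>UNIV. y $ i * y $ i))"
    by (intro ext) (unfold Wf_def norm_sq_sum, simp add: power2_eq_square)
  show ?thesis unfolding eq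
    by (intro Smv_add Smv_mult Smv_const Smv_time Smv_sum Smv_coord) auto
qed

theorem theorem3p3:
  fixes c lam :: real
  assumes dim: "CARD('n) \<ge> 3"
    and c_pos: "c > 0" and lam_pos: "lam > 0"
  shows
    "(\<forall>(y :: real ^ 'n) t. t > 0 \<and> norm y < c * t \<longrightarrow>
        (\<lambda>k. (lam / (2 * c)) ^ (Suc k * (CARD('n) - 2)) *
              sqrt (c\<^sup>2 * t\<^sup>2 - (norm y)\<^sup>2) powr (real (Suc k * (CARD('n) - 2)) - 2) /
              (Gamma (real (Suc k) * (real CARD('n) / 2 - 1)) *
               Gamma ((real CARD('n) - 1) / 2 + (real CARD('n) / 2 - 1) * real (Suc k))))
        sums fY c lam y t)
   \<and> all_partials_exist {(y :: real ^ 'n, t). t > 0 \<and> norm y < c * t} (fY c lam)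
   \<and> (\<forall>(y :: real ^ 'n) t. t > 0 \<and> norm y < c * t \<longrightarrow>
        (KG c ^^ (CARD('n) - 2)) (fY c lam) y t =
          lam ^ (2 * (CARD('n) - 2)) * fY c lam y t
          + (2 * lam * c) ^ (CARD('n) - 2) *
            ((c\<^sup>2 * t\<^sup>2 - (norm y)\<^sup>2) powr (- real CARD('n) / 2) /
             (sqrt pi * Gamma (1 - real CARD('n) / 2))))"
proof -
  define N where "N = CARD('n) - 2"
  define n where "n = real N / 2"
  have N1: "N \<ge> 1" using dim by (simp add: N_def)
  have D: "real CARD('n) = real N + 2" using dim by (simp add: N_def)
  have Seq: "{(y :: real ^ 'n, t). t > 0 \<and> norm y < c * t} = Sreg c" by (simp add: Sreg_def)
  have base: "\<forall>y t. (y, t) \<in> (Sreg c :: ((real ^ 'n) \<times> real) set) \<longrightarrow>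
      fY c lam y t = GS n (Ec N c lam 0) (n - 1) (Wf c y t)"
    using fY_point(2)[OF dim c_pos lam_pos] by (simp add: N_def n_def)
  have P1: "\<forall>(y :: real ^ 'n) t. t > 0 \<and> norm y < c * t \<longrightarrow>
        (\<lambda>k. (lam / (2 * c)) ^ (Suc k * (CARD('n) - 2)) *
              sqrt (c\<^sup>2 * t\<^sup>2 - (norm y)\<^sup>2) powr (real (Suc k * (CARD('n) - 2)) - 2) /
              (Gamma (real (Suc k) * (real CARD('n) / 2 - 1)) *
               Gamma ((real CARD('n) - 1) / 2 + (real CARD('n) / 2 - 1) * real (Suc k))))
        sums fY c lam y t"
    using fY_point(1)[OF dim c_pos lam_pos] by (auto simp: Sreg_def)
  have P2: "all_partials_exist {(y :: real ^ 'n, t). t > 0 \<and> norm y < c * t} (fY c lam)"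
    unfolding Seq
  proof (rule all_partials_from_Smv[OF open_Sreg])
    fix m
    have A: "Smv m (Sreg c) (\<lambda>(y :: real ^ 'n) t. GS n (Ec N c lam 0) (n - 1) (Wf c y t))"
      by (rule Smv_comp[OF GS_smooth[OF entire_Ec[OF N1]] Smv_Wf]) (use Wf_pos c_pos in auto)
    have B: "\<forall>y t. (y, t) \<in> (Sreg c :: ((real ^ 'n) \<times> real) set) \<longrightarrow>
        GS n (Ec N c lam 0) (n - 1) (Wf c y t) = fY c lam y t" using base by simp
    show "Smv m (Sreg c) (fY c lam :: real ^ 'n \<Rightarrow> real \<Rightarrow> real)"
      by (rule Smv_cong[OF open_Sreg B A])
  qed
  have P3: "\<forall>(y :: real ^ 'n) t. t > 0 \<and> norm y < c * t \<longrightarrow>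
        (KG c ^^ (CARD('n) - 2)) (fY c lam) y t =
          lam ^ (2 * (CARD('n) - 2)) * fY c lam y t
          + (2 * lam * c) ^ (CARD('n) - 2) *
            ((c\<^sup>2 * t\<^sup>2 - (norm y)\<^sup>2) powr (- real CARD('n) / 2) /
             (sqrt pi * Gamma (1 - real CARD('n) / 2)))"
  proof (intro allI impI)
    fix y :: "real ^ 'n" and t :: real
    assume a: "t > 0 \<and> norm y < c * t"
    then have yt: "(y, t) \<in> Sreg c" by (simp add: Sreg_def)
    have it: "(KG c ^^ N) (fY c lam) y t = GS n (Ec N c lam N) (n - 1 - real N) (Wf c y t)"
      using KG_iter[OF dim c_pos, of "fY c lam" lam] base yt by (simp add: N_def n_def)
    also have "\<dots> = lam ^ (2 * N) * GS n (Ec N c lam 0) (n - 1) (Wf c y t)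
     + (2 * lam * c) ^ N * (Wf c y t powr (- (real N + 2) / 2) / (sqrt pi * Gamma (1 - (real N + 2) / 2)))"
      unfolding n_def by (rule final_id[OF N1 c_pos Wf_pos[OF yt c_pos]])
    also have "GS n (Ec N c lam 0) (n - 1) (Wf c y t) = fY c lam y t" using base yt by simp
    finally show "(KG c ^^ (CARD('n) - 2)) (fY c lam) y t =
          lam ^ (2 * (CARD('n) - 2)) * fY c lam y t
          + (2 * lam * c) ^ (CARD('n) - 2) *
            ((c\<^sup>2 * t\<^sup>2 - (norm y)\<^sup>2) powr (- real CARD('n) / 2) /
             (sqrt pi * Gamma (1 - real CARD('n) / 2)))"
      unfolding N_def[symmetric] D by (simp add: Wf_def)
  qed
  show ?thesis using P1 P2 P3 by blast
qed


end
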